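(* Under the hypotheses of Theorem 1 (regular spherically symmetric asymptotically flat Einstein–Maxwell data, electrovacuum outside the ball $\mathcal{B}=\{l\le l_0\}$ of area radius $\mathcal{R}$, dominant energy condition in $\mathcal{B}$, total charge $Q\ne0$, ADM mass $M$), suppose $M\ge |Q|$ and the exterior region $\{l\ge l_0\}$ is untrapped. Then $\mathcal{R}> r_+:=M+\sqrt{M^2-Q^2}\ge |Q|$; in particular $\mathcal{R}>|Q|$. If instead $M\ge|Q|$ and the exterior region is not untrapped, the horizon is the sphere at the largest $l_1\ge l_0$ with $r(l_1)=r_+$, and its area radius is $\mathcal{R}_0=r_+$.
   Context: Metric $dl^2+r(l)^2(d\theta^2+\sin^2\theta d\phi^2)$ on $\mathbb{R}^3$, $r(0)=0$, $r'(0)=1$; $K_{ij}=n_in_jK_l+(h_{ij}-n_in_j)K_r$. Null expansions $\theta^\pm=\frac2r(r'\pm K_rr)$; a region is untrapped if $\theta^+\theta^->0$ there, trapped if $\theta^+\theta^-<0$; a horizon is the outer boundary of a trapped region ($\theta^+\theta^-=0$ there). Asymptotic flatness gives $r(l)\to\infty$ as $l\to\infty$. Electrovacuum: no non-electromagnetic matter, no momentum density, no charge density; no magnetic field. Charge $Q=E(l_0)r(l_0)^2$ where $E$ is the radial electric field. *)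

theory Defs
  imports "HOL-Analysis.Analysis"
begin

text \<open>Spherically symmetric initial data: metric dl^2 + r(l)^2 dOmega^2 on R^3,
  K = n n K_l + (h - n n) K_r, radial electric field E, no magnetic field.
  mu, J, rho_e: energy density, radial momentum density and charge density of the
  non-electromagnetic matter. Units G = 1, Gaussian units.\<close>

definition regular_sph_data ::
  "(real \<Rightarrow> real) \<Rightarrow> (real \<Rightarrow> real) \<Rightarrow> (real \<Rightarrow> real) \<Rightarrow> (real \<Rightarrow> real) \<Rightarrow> bool" where
  "regular_sph_data r Kl Kr E \<longleftrightarrow>
     r 0 = 0 \<and> continuous_on {0..} r \<and> (r has_real_derivative 1) (at 0 within {0..}) \<and>
     (\<forall>l>0. r l > 0 \<and> r differentiable at l \<and> deriv r differentiable at l \<and>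
             continuous (at l) Kl \<and> Kr differentiable at l \<and> E differentiable at l)"

definition einstein_maxwell_constraints ::
  "(real \<Rightarrow> real) \<Rightarrow> (real \<Rightarrow> real) \<Rightarrow> (real \<Rightarrow> real) \<Rightarrow> (real \<Rightarrow> real) \<Rightarrow>
   (real \<Rightarrow> real) \<Rightarrow> (real \<Rightarrow> real) \<Rightarrow> (real \<Rightarrow> real) \<Rightarrow> bool" where
  "einstein_maxwell_constraints r Kl Kr E mu J rho_e \<longleftrightarrow>
     (\<forall>l>0.
        (2 / (r l)^2) * (1 - (deriv r l)^2 - 2 * r l * deriv (deriv r) l)
          + 4 * Kl l * Kr l + 2 * (Kr l)^2 = 16 * pi * mu l + 2 * (E l)^2
      \<and> - 2 * deriv Kr l + 2 * deriv r l / r l * (Kl l - Kr l) = 8 * pi * J l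
      \<and> deriv (\<lambda>s. (r s)^2 * E s) l = 4 * pi * (r l)^2 * rho_e l)"

definition electrovacuum_outside ::
  "real \<Rightarrow> (real \<Rightarrow> real) \<Rightarrow> (real \<Rightarrow> real) \<Rightarrow> (real \<Rightarrow> real) \<Rightarrow> bool" where
  "electrovacuum_outside l0 mu J rho_e \<longleftrightarrow>
     (\<forall>l\<ge>l0. mu l = 0 \<and> J l = 0 \<and> rho_e l = 0)"

definition dominant_energy_in_ball :: "real \<Rightarrow> (real \<Rightarrow> real) \<Rightarrow> (real \<Rightarrow> real) \<Rightarrow> bool" where
  "dominant_energy_in_ball l0 mu J \<longleftrightarrow> (\<forall>l. 0 < l \<and> l \<le> l0 \<longrightarrow> mu l \<ge> \<bar>J l\<bar>)"

definition asymptotically_flat ::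
  "(real \<Rightarrow> real) \<Rightarrow> (real \<Rightarrow> real) \<Rightarrow> (real \<Rightarrow> real) \<Rightarrow> bool" where
  "asymptotically_flat r Kl Kr \<longleftrightarrow>
     filterlim r at_top at_top \<and>
     (\<exists>C. \<forall>\<^sub>F l in at_top. \<bar>Kl l\<bar> * (r l)^2 \<le> C \<and> \<bar>Kr l\<bar> * (r l)^2 \<le> C)"

text \<open>ADM mass of the spherically symmetric metric (area-radius form:
  M = lim r/2 (1 - 1/g_rr), with g_rr = 1/r'^2).\<close>
definition adm_mass :: "(real \<Rightarrow> real) \<Rightarrow> real \<Rightarrow> bool" where
  "adm_mass r M \<longleftrightarrow> ((\<lambda>l. r l / 2 * (1 - (deriv r l)^2)) \<longlongrightarrow> M) at_top"

definition theta_plus :: "(real \<Rightarrow> real) \<Rightarrow> (real \<Rightarrow> real) \<Rightarrow> real \<Rightarrow> real" where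
  "theta_plus r Kr l = 2 / r l * (deriv r l + Kr l * r l)"

definition theta_minus :: "(real \<Rightarrow> real) \<Rightarrow> (real \<Rightarrow> real) \<Rightarrow> real \<Rightarrow> real" where
  "theta_minus r Kr l = 2 / r l * (deriv r l - Kr l * r l)"

definition untrapped_on :: "real set \<Rightarrow> (real \<Rightarrow> real) \<Rightarrow> (real \<Rightarrow> real) \<Rightarrow> bool" where
  "untrapped_on S r Kr \<longleftrightarrow> (\<forall>l\<in>S. theta_plus r Kr l * theta_minus r Kr l > 0)"

text \<open>Horizon at l1: marginal sphere (theta+ theta- = 0) bounding the exterior untrapped
  region, i.e. the outer boundary of the (marginally) trapped region.\<close>
definition is_horizon :: "(real \<Rightarrow> real) \<Rightarrow> (real \<Rightarrow> real) \<Rightarrow> real \<Rightarrow> bool" where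
  "is_horizon r Kr l1 \<longleftrightarrow>
     theta_plus r Kr l1 * theta_minus r Kr l1 = 0 \<and>
     (\<forall>l>l1. theta_plus r Kr l * theta_minus r Kr l > 0)"

definition r_plus :: "real \<Rightarrow> real \<Rightarrow> real" where
  "r_plus M Q = M + sqrt (M^2 - Q^2)"

end

theory Submission
  imports Defs
begin

lemma const_right:
  fixes f :: "real \<Rightarrow> real"
  assumes d: "\<And>x. x \<ge> a \<Longrightarrow> DERIV f x :> 0" and "x \<ge> a"
  shows "f x = f a"
proof (cases "x = a")
  case False
  then have "a < x" using assms(2) by simp
  moreover have "continuous_on {a..x} f"
    by (intro continuous_at_imp_continuous_on ballI DERIV_isCont) (use d in auto)
  ultimately show ?thesis using DERIV_isconst2[of a x f x] d by auto
qed simp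

lemma mass_alg:
  fixes r p q k kp kl Q :: real
  assumes r: "r > 0"
    and H: "(2 / r^2) * (1 - p^2 - 2 * r * q) + 4 * kl * k + 2 * k^2 = 2 * (Q / r^2)^2"
    and Mo: "- 2 * kp + 2 * p / r * (kl - k) = 0"
  shows "p/2*(1 - p^2 + k^2*r^2) + r/2*(-(2*p*q) + (2*k*kp*r^2 + k^2*(2*r*p))) - Q^2*p/(2*r^2) = 0"
proof -
  have kp: "kp = p * (kl - k) / r" using Mo r by (simp add: field_simps)
  have H': "1 - p^2 - 2 * r * q = r^2/2 * (2 * (Q / r^2)^2 - 4 * kl * k - 2 * k^2)"
    using H r by (simp add: field_simps)
  have q: "2 * r * q = 1 - p^2 + r^2 * (2*kl*k + k^2) - Q^2 / r^2"
  proof -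
    have "r^2/2 * (2 * (Q / r^2)^2 - 4 * kl * k - 2 * k^2) = Q^2/r^2 - r^2 * (2*kl*k + k^2)"
      using r by (simp add: field_simps power2_eq_square)
    with H' show ?thesis by linarith
  qed
  have "p/2*(1 - p^2 + k^2*r^2) + r/2*(-(2*p*q) + (2*k*kp*r^2 + k^2*(2*r*p))) - Q^2*p/(2*r^2)
      = p/2*(1 - p^2 + k^2*r^2 - 2*r*q) + k*kp*r^3 + k^2*r^2*p - Q^2*p/(2*r^2)"
    by (simp add: algebra_simps power2_eq_square power3_eq_cube)
  also have "\<dots> = 0" unfolding q kp using r
    by (simp add: field_simps power2_eq_square power3_eq_cube)
  finally show ?thesis .
qed

lemma prod_e1:
  fixes R p k M Q :: real
  assumes rl: "R > 0" and mM: "R / 2 * (1 - p^2 + k^2 * R^2) + Q^2 / (2 * R) = M"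
  shows "p^2 - k^2 * R^2 = 1 - 2*M/R + Q^2/R^2"
proof -
  have "M = R / 2 * (1 - p^2 + k^2 * R^2) + Q^2 / (2 * R)" using mM by simp
  then have "2*M/R = 1 - p^2 + k^2 * R^2 + Q^2/R^2" using rl by (simp add: field_simps power2_eq_square)
  then show ?thesis by simp
qed

lemma prod_e2:
  fixes R p k g M Q :: real
  assumes rl: "R > 0"  and e1: "p^2 - k^2 * R^2 = 1 - 2*M/R + Q^2/R^2" and e2: "g = R^2 - 2*M*R + Q^2"
  shows "2 / R * (p + k * R) * (2 / R * (p - k * R)) = 4 * g / R^4"
proof -
  have "2 / R * (p + k * R) * (2 / R * (p - k * R)) = 4 / R^2 * (p^2 - k^2 * R^2)"
    using rl by (simp add: field_simps power2_eq_square)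
  also have "\<dots> = 4 * g / R^4" unfolding e1 e2 using rl
    by (simp add: field_simps power2_eq_square power4_eq_xxxx)
  finally show ?thesis .
qed

theorem mainTheorem5:
  fixes r Kl Kr E mu J rho_e :: "real \<Rightarrow> real" and l0 M Q :: real
  assumes "regular_sph_data r Kl Kr E"
    and "einstein_maxwell_constraints r Kl Kr E mu J rho_e"
    and "l0 > 0"
    and "electrovacuum_outside l0 mu J rho_e"
    and "dominant_energy_in_ball l0 mu J"
    and "asymptotically_flat r Kl Kr"
    and "adm_mass r M"
    and "Q = E l0 * (r l0)^2"
    and "Q \<noteq> 0"
    and "M \<ge> \<bar>Q\<bar>"
  shows "(untrapped_on {l0..} r Kr \<longrightarrow>
            r l0 > r_plus M Q \<and> r_plus M Q \<ge> \<bar>Q\<bar> \<and> r l0 > \<bar>Q\<bar>)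
       \<and> (\<not> untrapped_on {l0..} r Kr \<longrightarrow>
            (\<exists>l1\<ge>l0. r l1 = r_plus M Q \<and> (\<forall>l>l1. r l \<noteq> r_plus M Q)
                     \<and> is_horizon r Kr l1))"
proof -
  note reg = assms(1)[unfolded regular_sph_data_def]
  note con = assms(2)[unfolded einstein_maxwell_constraints_def]
  note ev = assms(4)[unfolded electrovacuum_outside_def]
  have rpos: "r l > 0" if "l > 0" for l using reg that by auto
  have dr: "DERIV r l :> deriv r l" if "l > 0" for l
    using reg that DERIV_deriv_iff_real_differentiable by blast
  have ddr: "DERIV (deriv r) l :> deriv (deriv r) l" if "l > 0" for l
    using reg that DERIV_deriv_iff_real_differentiable by blast
  have dK: "DERIV Kr l :> deriv Kr l" if "l > 0" for l
    using reg that DERIV_deriv_iff_real_differentiable by blast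
  have dE: "DERIV E l :> deriv E l" if "l > 0" for l
    using reg that DERIV_deriv_iff_real_differentiable by blast
  have gauss0: "DERIV (\<lambda>s. (r s)^2 * E s) l :> 0" if "l \<ge> l0" for l
  proof -
    have l: "l > 0" using that assms(3) by simp
    have D: "DERIV (\<lambda>s. (r s)^2 * E s) l :> (2 * r l * deriv r l * E l + (r l)^2 * deriv E l)"
      using dr[OF l] dE[OF l] by (auto intro!: derivative_eq_intros)
    have "deriv (\<lambda>s. (r s)^2 * E s) l = 0" using con l ev that by auto
    with D show ?thesis using DERIV_imp_deriv by metis
  qed
  have EQ: "(r l)^2 * E l = Q" if "l \<ge> l0" for l
    using const_right[OF gauss0 that] assms(8) by (simp add: mult.commute)
  have Eval: "E l = Q / (r l)^2" if "l \<ge> l0" for l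
    using EQ[OF that] rpos[of l] that assms(3) by (simp add: field_simps)
  define m where "m = (\<lambda>l. r l / 2 * (1 - (deriv r l)^2 + (Kr l)^2 * (r l)^2) + Q^2 / (2 * r l))"
  have dm: "DERIV m l :> 0" if "l \<ge> l0" for l
  proof -
    have l: "l > 0" using that assms(3) by simp
    have rl: "r l > 0" using rpos[OF l] .
    have D: "DERIV m l :> (deriv r l/2*(1 - (deriv r l)^2 + (Kr l)^2*(r l)^2) + r l/2*(-(2*deriv r l*deriv (deriv r) l) + (2*Kr l*deriv Kr l*(r l)^2 + (Kr l)^2*(2*r l*deriv r l))) - Q^2*deriv r l/(2*(r l)^2))"
      unfolding m_def using dr[OF l] ddr[OF l] dK[OF l] rl
      by (auto intro!: derivative_eq_intros simp: power2_eq_square field_simps)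
    have H: "(2 / (r l)^2) * (1 - (deriv r l)^2 - 2 * r l * deriv (deriv r) l) + 4 * Kl l * Kr l + 2 * (Kr l)^2 = 2 * (Q / (r l)^2)^2"
      using con l ev that Eval[OF that] by auto
    have Mo: "- 2 * deriv Kr l + 2 * deriv r l / r l * (Kl l - Kr l) = 0"
      using con l ev that by auto
    show ?thesis using D mass_alg[OF rl H Mo] by simp
  qed
  have mconst: "m l = m l0" if "l \<ge> l0" for l using const_right[OF dm that] .
  obtain C where C: "\<forall>\<^sub>F l in at_top. \<bar>Kr l\<bar> * (r l)^2 \<le> C"
    using assms(6) unfolding asymptotically_flat_def by (metis (mono_tags, lifting) eventually_mono)
  have rinf: "filterlim r at_top at_top" using assms(6) unfolding asymptotically_flat_def by blast
  define B where "B = (\<lambda>l. (Kr l)^2 * (r l)^3 / 2 + Q^2 / (2 * r l))"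
  have Blim: "(B \<longlongrightarrow> 0) at_top"
  proof (rule tendsto_sandwich)
    have ev1: "\<forall>\<^sub>F l in at_top. r l > 0" using rinf by (simp add: filterlim_at_top_dense)
    show "\<forall>\<^sub>F l in at_top. (\<lambda>_. 0) l \<le> B l"
      using ev1 by eventually_elim (auto simp: B_def)
    show "\<forall>\<^sub>F l in at_top. B l \<le> ((C^2/2 + Q^2/2) * inverse (r l))"
      using ev1 C
    proof eventually_elim
      case (elim l)
      have a: "(Kr l)^2 * (r l)^3 = (\<bar>Kr l\<bar> * (r l)^2)^2 / r l"
        using elim by (simp add: field_simps power2_eq_square power3_eq_cube)
      have "(\<bar>Kr l\<bar> * (r l)^2)^2 \<le> C^2"
        using elim by (intro power_mono) auto
      then have "(Kr l)^2 * (r l)^3 \<le> C^2 / r l" unfolding a using elim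
        by (simp add: divide_right_mono)
      then show ?case using elim by (simp add: B_def field_simps)
    qed
    show "((\<lambda>_. 0) \<longlongrightarrow> (0::real)) at_top" by simp
    show "((\<lambda>l. (C^2/2 + Q^2/2) * inverse (r l)) \<longlongrightarrow> 0) at_top"
      using tendsto_mult_right_zero[OF tendsto_inverse_0_at_top[OF rinf]] by simp
  qed
  have A1: "((\<lambda>l. r l / 2 * (1 - (deriv r l)^2)) \<longlongrightarrow> M) at_top"
    using assms(7) unfolding adm_mass_def .
  have A2: "((\<lambda>l. r l / 2 * (1 - (deriv r l)^2)) \<longlongrightarrow> m l0 - 0) at_top"
  proof (rule Lim_transform_eventually[OF tendsto_diff[OF tendsto_const Blim]])
    show "\<forall>\<^sub>F l in at_top. m l0 - B l = r l / 2 * (1 - (deriv r l)^2)"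
      using eventually_ge_at_top[of l0]
    proof eventually_elim
      case (elim l)
      then show ?case using mconst[OF elim] unfolding m_def B_def
        by (simp add: algebra_simps power2_eq_square power3_eq_cube)
    qed
  qed
  have Mm: "m l0 = M" using tendsto_unique[OF _ A2 A1] by simp
  define sq where "sq = sqrt (M^2 - Q^2)"
  define rp where "rp = M + sq"
  define rm where "rm = M - sq"
  have "\<bar>Q\<bar>^2 \<le> M^2" using assms(10) by (intro power_mono) auto
  then have MQ: "M^2 - Q^2 \<ge> 0" by simp
  have sq0: "sq \<ge> 0" and sq2: "sq^2 = M^2 - Q^2" using MQ by (auto simp: sq_def)
  have rpdef: "r_plus M Q = rp" by (simp add: r_plus_def rp_def sq_def)
  have rmrp: "rm \<le> rp" using sq0 by (simp add: rm_def rp_def)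
  have rpQ: "rp \<ge> \<bar>Q\<bar>" using sq0 assms(10) by (simp add: rp_def)
  define g where "g = (\<lambda>l. (r l - rp) * (r l - rm))"
  have prod: "theta_plus r Kr l * theta_minus r Kr l = 4 * g l / (r l)^4" if "l \<ge> l0" for l
  proof -
    have l: "l > 0" using that assms(3) by simp
    have rl: "r l > 0" using rpos[OF l] .
    have mM: "r l / 2 * (1 - (deriv r l)^2 + (Kr l)^2 * (r l)^2) + Q^2 / (2 * r l) = M"
      using mconst[OF that] Mm unfolding m_def by simp
    have e2: "g l = (r l)^2 - 2*M*r l + Q^2"
    proof -
      have "g l = (r l - M)^2 - sq^2" unfolding g_def rp_def rm_def
        by (simp add: algebra_simps power2_eq_square)
      then show ?thesis unfolding sq2 by (simp add: algebra_simps power2_eq_square)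
    qed
    show ?thesis unfolding theta_plus_def theta_minus_def
      by (rule prod_e2[OF rl prod_e1[OF rl mM] e2])
  qed
  have prodpos: "theta_plus r Kr l * theta_minus r Kr l > 0 \<longleftrightarrow> g l > 0" if "l \<ge> l0" for l
  proof -
    have "(r l)^4 > 0" using rpos[of l] that assms(3) by simp
    then show ?thesis unfolding prod[OF that] by (simp add: zero_less_divide_iff)
  qed
  have gpos: "g l > 0" if "r l > rp" for l
    using that rmrp unfolding g_def by (intro mult_pos_pos) auto
  have g0: "g l = 0" if "r l = rp" for l using that unfolding g_def by simp
  obtain L where L: "\<And>l. l \<ge> L \<Longrightarrow> r l > rp"
    using rinf unfolding filterlim_at_top_dense eventually_at_top_linorder by blast
  have cont: "continuous_on {a..b} r" if "a \<ge> 0" for a b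
    using reg that by (auto intro: continuous_on_subset)
  have hit: "\<exists>x\<ge>a. r x = rp" if "a \<ge> 0" "r a \<le> rp" for a
  proof -
    have "r (max L a) > rp" using L by simp
    then have "\<exists>x. a \<le> x \<and> x \<le> max L a \<and> r x = rp"
      by (intro IVT'[of r a rp "max L a"] cont[OF that(1)] that(2)) auto
    then show ?thesis by blast
  qed
  have part1: "r l0 > rp" if U: "untrapped_on {l0..} r Kr"
  proof (rule ccontr)
    assume "\<not> r l0 > rp"
    then obtain x where x: "x \<ge> l0" "r x = rp" using hit[of l0] assms(3) by auto
    then have "\<not> theta_plus r Kr x * theta_minus r Kr x > 0" using prodpos[OF x(1)] g0 by simp
    with U x show False unfolding untrapped_on_def by auto
  qed
  have part2: "\<exists>l1\<ge>l0. r l1 = rp \<and> (\<forall>l>l1. r l \<noteq> rp) \<and> is_horizon r Kr l1"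
    if U: "\<not> untrapped_on {l0..} r Kr"
  proof -
    obtain l2 where l2: "l2 \<ge> l0" "\<not> theta_plus r Kr l2 * theta_minus r Kr l2 > 0"
      using U unfolding untrapped_on_def by auto
    have "r l2 \<le> rp"
    proof (rule ccontr)
      assume "\<not> r l2 \<le> rp"
      then have "g l2 > 0" using gpos by simp
      then show False using l2 prodpos[OF l2(1)] by simp
    qed
    then obtain x where x: "x \<ge> l2" "r x = rp" using hit[of l2] l2 assms(3) by auto
    define S where "S = {l0..} \<inter> r -` {rp}"
    have xS: "x \<in> S" using x l2 by (simp add: S_def)
    have clS: "closed S" unfolding S_def
      by (rule continuous_closed_preimage) (use reg assms(3) in \<open>auto intro: continuous_on_subset[of "{0..}"]\<close>)
    have bS: "bdd_above S" unfolding bdd_above_def S_def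
    proof (intro exI ballI)
      fix l assume "l \<in> {l0..} \<inter> r -` {rp}"
      then show "l \<le> L" using L[of l] by (cases "l \<ge> L") auto
    qed
    define l1 where "l1 = Sup S"
    have l1S: "l1 \<in> S" unfolding l1_def using closed_contains_Sup[OF _ bS clS] xS by blast
    have up: "l \<le> l1" if "l \<in> S" for l unfolding l1_def using cSup_upper[OF that bS] .
    have l1: "l1 \<ge> l0" "r l1 = rp" using l1S by (auto simp: S_def)
    have gt: "r l > rp" if ll1: "l > l1" for l
    proof (rule ccontr)
      assume "\<not> r l > rp"
      then obtain y where "y \<ge> l" "r y = rp" using hit[of l] ll1 l1 assms(3) by auto
      then have "y \<in> S" using ll1 l1 by (simp add: S_def)
      with up[OF this] \<open>y \<ge> l\<close> ll1 show False by simp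
    qed
    have hor: "is_horizon r Kr l1" unfolding is_horizon_def
    proof
      show "theta_plus r Kr l1 * theta_minus r Kr l1 = 0" using prod[OF l1(1)] g0[OF l1(2)] by simp
      show "\<forall>l>l1. theta_plus r Kr l * theta_minus r Kr l > 0"
      proof (intro allI impI)
        fix l assume "l > l1"
        then show "theta_plus r Kr l * theta_minus r Kr l > 0"
          using prodpos[of l] gpos[OF gt] l1(1) by simp
      qed
    qed
    show ?thesis using l1 gt hor by (metis less_irrefl)
  qed
  show ?thesis unfolding rpdef using part1 part2 rpQ by auto
qed

end
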